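(* Let $k\in\omega\setminus\{0,1\}$ and let $\varphi:\omega\to\omega$ be a nondecreasing function with $\varphi(n)\ge n$ for all $n\in\omega$ and $\varphi(0)=0$. Then there exist a closed class $A$ of decision tables from $\mathcal M_k^\infty$ and a bounded complexity measure $\psi$ such that $\mathcal H^\infty_{\psi,A}$ is everywhere defined and $\varphi(n)\le\mathcal H^\infty_{\psi,A}(n)\le\varphi(n)+n$ for all $n\in\omega$.
   Context: Notation: $\omega=\{0,1,2,\dots\}$; $\mathcal P(\omega)$ is the set of nonempty finite subsets of $\omega$; for $k\in\omega\setminus\{0,1\}$, $E_k=\{0,1,\dots,k-1\}$. $P=\{f_i:i\in\omega\}$ is a set of attributes, $f_i\neq f_j$ for $i\ne j$. Decision tables: $\mathcal M_k^\infty$ is the set of rectangular tables filled with numbers from $E_k$, whose columns are labeled with pairwise different attributes from $P$, whose rows are pairwise different, and each row of which is labeled with a set from $\mathcal P(\omega)$ (its set of decisions). The empty table (no rows) is denoted $\Lambda$ and belongs to $\mathcal M_k^\infty$. For $T\in\mathcal M_k^\infty$: $\Delta(T)$ is the set of rows; $\Pi(T)$ is the intersection of the decision sets of all rows (common decisions); $\mathrm{At}(T)$ is the set of attributes labeling columns. For nonempty $T$ and a word $\alpha=(f_{i_1},\delta_1)\cdots(f_{i_m},\delta_m)$ with $f_{i_j}\in\mathrm{At}(T)$, $\delta_j\in E_k$, $T\alpha$ is the subtable of $T$ consisting of the rows having value $\delta_j$ in the column $f_{i_j}$ for all $j$; for the empty word $\lambda$, $T\lambda=T$. Operations: for $D\subseteq\mathrm{At}(T)$,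 $I(D,T)$ is obtained from $T$ by deleting the columns labeled with attributes from $D$ and, in each group of rows coinciding on the remaining columns, keeping only the first row; $I(\mathrm{At}(T),T)=\Lambda$. For $\nu:E_k^{|\mathrm{At}(T)|}\to\mathcal P(\omega)$, $J(\nu,T)$ is obtained by replacing the decision set of each row $\bar\delta$ by $\nu(\bar\delta)$. $[T]=\{J(\nu,I(D,T)):D\subseteq\mathrm{At}(T),\ \nu:E_k^{|\mathrm{At}(T)\setminus D|}\to\mathcal P(\omega)\}$; for nonempty $A\subseteq\mathcal M_k^\infty$, $[A]=\bigcup_{T\in A}[T]$. $A$ is a closed class if $[A]=A$. Decision trees: a $k$-decision tree is a finite directed rooted tree with at least two nodes in which the root and the edges leaving the root are unlabeled, each terminal node is labeled with a decision from $\omega$, and each other node is labeled with an attribute from $P$, each edge leaving such a node being labeled with a number from $E_k$. $\mathrm{At}(\Gamma)$ is the set of attributes labeling nodes of $\Gamma$. For a complete path $\tau=v_1,d_1,\dots,v_m,d_m,v_{m+1}$ (from the root to a terminal node), $\pi(\tau)=\lambda$ if $m=1$, and otherwise $\pi(\tau)=(f_{i_2},\delta_2)\cdots(f_{i_m},\delta_m)$ where $v_j$ is labeled $f_{i_j}$ and $d_j$ is labeled $\delta_j$; $T(\tau)=T\pi(\tau)$. For $T\ne\Lambda$, a nondeterministic decision tree for $T$ is a $k$-decision tree $\Gamma$ with $\mathrm{At}(\Gamma)\subseteq\mathrm{At}(T)$ such that every row of $T$ belongs to $T(\tau)$ for some complete path $\tau$, and for every complete path $\tau$ either $T(\tau)=\Lambda$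 or the decision at the terminal node of $\tau$ belongs to $\Pi(T(\tau))$. A deterministic decision tree for $T$ is a nondeterministic decision tree for $T$ in which, additionally, exactly one edge leaves the root and the edges leaving any node that is neither the root nor terminal are labeled with pairwise different numbers. Complexity measures: a partially bounded complexity measure is a function $\psi:P^*\to\omega$ on finite words over $P$ such that for all words $\alpha_1,\alpha_2$: $\psi(\alpha_1)=0$ iff $\alpha_1=\lambda$; $\psi(\alpha_1)$ is invariant under permutation of letters; $\psi(\alpha_1)\le\psi(\alpha_1\alpha_2)$; $\psi(\alpha_1\alpha_2)\le\psi(\alpha_1)+\psi(\alpha_2)$. It is bounded if in addition $\psi(\alpha)\ge|\alpha|$ for all $\alpha$. $\psi$ is extended to words $(f_{i_1},\delta_1)\cdots(f_{i_m},\delta_m)$ by $\psi(f_{i_1}\cdots f_{i_m})$. For a $k$-decision tree $\Gamma$, $\psi(\Gamma)=\max_\tau\psi(\pi(\tau))$ over complete paths. For $T\ne\Lambda$, $\psi^d(T)$ (resp. $\psi^a(T)$) is the minimum of $\psi(\Gamma)$ over deterministic (resp. nondeterministic) decision trees $\Gamma$ for $T$; $\psi^d(\Lambda)=\psi^a(\Lambda)=0$. $\mathcal H^\infty_{\psi,A}(n)$ is undefined if the set $\{\psi^d(T):T\in A,\ \psi^a(T)\le n\}$ is infinite, and otherwise equals its maximum; it is everywhere defined if defined for all $n\in\omega$. *)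

theory Defs
  imports "HOL-Library.Multiset"
begin

text \<open>Attributes f_i are represented by their indices i :: nat; decisions are nats;
  values are nats (in E_k = {0..<k}).  A table is a pair (column labels, rows), where
  each row is a pair (tuple of values, set of decisions).  The order of rows matters
  (operation I keeps the first row of each group).\<close>

type_synonym table = "nat list \<times> (nat list \<times> nat set) list"

definition cols :: "table \<Rightarrow> nat list" where "cols T = fst T"
definition rows :: "table \<Rightarrow> (nat list \<times> nat set) list" where "rows T = snd T"

definition Lam :: table where "Lam = ([], [])"

definition At :: "table \<Rightarrow> nat set" where "At T = set (cols T)"

definition Pi_tab :: "table \<Rightarrow> nat set" where
  "Pi_tab T = \<Inter> (snd ` set (rows T))"

definition M_k :: "nat \<Rightarrow> table set" where
  "M_k k = {T. distinct (cols T) \<and> distinct (map fst (rows T))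
     \<and> (\<forall>r\<in>set (rows T). length (fst r) = length (cols T) \<and> (\<forall>v\<in>set (fst r). v < k)
           \<and> finite (snd r) \<and> snd r \<noteq> {})
     \<and> (rows T = [] \<longleftrightarrow> cols T = [])}"

definition row_matches :: "table \<Rightarrow> (nat \<times> nat) list \<Rightarrow> nat list \<Rightarrow> bool" where
  "row_matches T \<alpha> r = (\<forall>p\<in>set \<alpha>. map_of (zip (cols T) r) (fst p) = Some (snd p))"

definition subtab :: "table \<Rightarrow> (nat \<times> nat) list \<Rightarrow> table" where
  "subtab T \<alpha> = (let rs = filter (\<lambda>r. row_matches T \<alpha> (fst r)) (rows T)
                  in if rs = [] then Lam else (cols T, rs))"

definition keep_first :: "(nat list \<times> nat set) list \<Rightarrow> (nat list \<times> nat set) list" where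
  "keep_first rs = [rs ! i. i \<leftarrow> [0..<length rs], \<forall>j<i. fst (rs ! j) \<noteq> fst (rs ! i)]"

definition I_op :: "nat set \<Rightarrow> table \<Rightarrow> table" where
  "I_op D T = (if D = At T then Lam else
     (filter (\<lambda>a. a \<notin> D) (cols T),
      keep_first (map (\<lambda>r. ([fst r ! i. i \<leftarrow> [0..<length (cols T)], cols T ! i \<notin> D], snd r))
                      (rows T))))"

definition J_op :: "(nat list \<Rightarrow> nat set) \<Rightarrow> table \<Rightarrow> table" where
  "J_op \<nu> T = (cols T, map (\<lambda>r. (fst r, \<nu> (fst r))) (rows T))"

definition closure_tab :: "table \<Rightarrow> table set" where
  "closure_tab T = {J_op \<nu> (I_op D T) | D \<nu>. D \<subseteq> At T \<and> (\<forall>x. finite (\<nu> x) \<and> \<nu> x \<noteq> {})}"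

definition closure_cls :: "table set \<Rightarrow> table set" where
  "closure_cls A = (\<Union>T\<in>A. closure_tab T)"

definition closed_class :: "nat \<Rightarrow> table set \<Rightarrow> bool" where
  "closed_class k A \<longleftrightarrow> A \<noteq> {} \<and> A \<subseteq> M_k k \<and> closure_cls A = A"

text \<open>A (non-root) node: a terminal node labelled with a decision, or a node labelled
  with an attribute together with its outgoing edges (edge label, child).
  A k-decision tree is the list of subtrees hanging below the unlabelled root.\<close>
datatype dnode = Leaf nat | Node nat "(nat \<times> dnode) list"

type_synonym dtree = "dnode list"

inductive wf_node :: "nat \<Rightarrow> dnode \<Rightarrow> bool" for k where
  "wf_node k (Leaf d)"
| "cs \<noteq> [] \<Longrightarrow> (\<forall>p\<in>set cs. fst p < k \<and> wf_node k (snd p)) \<Longrightarrow> wf_node k (Node a cs)"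

inductive det_node :: "dnode \<Rightarrow> bool" where
  "det_node (Leaf d)"
| "distinct (map fst cs) \<Longrightarrow> (\<forall>p\<in>set cs. det_node (snd p)) \<Longrightarrow> det_node (Node a cs)"

definition k_tree :: "nat \<Rightarrow> dtree \<Rightarrow> bool" where
  "k_tree k \<Gamma> \<longleftrightarrow> \<Gamma> \<noteq> [] \<and> (\<forall>t\<in>set \<Gamma>. wf_node k t)"

inductive has_attr :: "dnode \<Rightarrow> nat \<Rightarrow> bool" where
  "has_attr (Node a cs) a"
| "p \<in> set cs \<Longrightarrow> has_attr (snd p) b \<Longrightarrow> has_attr (Node a cs) b"

definition At_tree :: "dtree \<Rightarrow> nat set" where
  "At_tree \<Gamma> = {a. \<exists>t\<in>set \<Gamma>. has_attr t a}"

inductive path_of :: "dnode \<Rightarrow> (nat \<times> nat) list \<Rightarrow> nat \<Rightarrow> bool" where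
  "path_of (Leaf d) [] d"
| "p \<in> set cs \<Longrightarrow> path_of (snd p) w d \<Longrightarrow> path_of (Node a cs) ((a, fst p) # w) d"

definition complete_path :: "dtree \<Rightarrow> (nat \<times> nat) list \<Rightarrow> nat \<Rightarrow> bool" where
  "complete_path \<Gamma> w d \<longleftrightarrow> (\<exists>t\<in>set \<Gamma>. path_of t w d)"

definition ndet_tree_for :: "nat \<Rightarrow> table \<Rightarrow> dtree \<Rightarrow> bool" where
  "ndet_tree_for k T \<Gamma> \<longleftrightarrow> k_tree k \<Gamma> \<and> At_tree \<Gamma> \<subseteq> At T
     \<and> (\<forall>r\<in>set (rows T). \<exists>w d. complete_path \<Gamma> w d \<and> r \<in> set (rows (subtab T w)))
     \<and> (\<forall>w d. complete_path \<Gamma> w d \<longrightarrow> subtab T w = Lam \<or> d \<in> Pi_tab (subtab T w))"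

definition det_tree_for :: "nat \<Rightarrow> table \<Rightarrow> dtree \<Rightarrow> bool" where
  "det_tree_for k T \<Gamma> \<longleftrightarrow> ndet_tree_for k T \<Gamma> \<and> length \<Gamma> = 1 \<and> (\<forall>t\<in>set \<Gamma>. det_node t)"

definition partially_bounded_cm :: "(nat list \<Rightarrow> nat) \<Rightarrow> bool" where
  "partially_bounded_cm \<psi> \<longleftrightarrow>
     (\<forall>w. \<psi> w = 0 \<longleftrightarrow> w = [])
   \<and> (\<forall>w w'. mset w = mset w' \<longrightarrow> \<psi> w = \<psi> w')
   \<and> (\<forall>w w'. \<psi> w \<le> \<psi> (w @ w'))
   \<and> (\<forall>w w'. \<psi> (w @ w') \<le> \<psi> w + \<psi> w')"

definition bounded_cm :: "(nat list \<Rightarrow> nat) \<Rightarrow> bool" where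
  "bounded_cm \<psi> \<longleftrightarrow> partially_bounded_cm \<psi> \<and> (\<forall>w. length w \<le> \<psi> w)"

definition psi_tree :: "(nat list \<Rightarrow> nat) \<Rightarrow> dtree \<Rightarrow> nat" where
  "psi_tree \<psi> \<Gamma> = Max {\<psi> (map fst w) | w d. complete_path \<Gamma> w d}"

definition psi_d :: "nat \<Rightarrow> (nat list \<Rightarrow> nat) \<Rightarrow> table \<Rightarrow> nat" where
  "psi_d k \<psi> T = (if T = Lam then 0 else LEAST m. \<exists>\<Gamma>. det_tree_for k T \<Gamma> \<and> psi_tree \<psi> \<Gamma> = m)"

definition psi_a :: "nat \<Rightarrow> (nat list \<Rightarrow> nat) \<Rightarrow> table \<Rightarrow> nat" where
  "psi_a k \<psi> T = (if T = Lam then 0 else LEAST m. \<exists>\<Gamma>. ndet_tree_for k T \<Gamma> \<and> psi_tree \<psi> \<Gamma> = m)"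

text \<open>H^infinity_{psi,A}(n): None = undefined.\<close>
definition H_fun :: "nat \<Rightarrow> (nat list \<Rightarrow> nat) \<Rightarrow> table set \<Rightarrow> nat \<Rightarrow> nat option" where
  "H_fun k \<psi> A n = (let S = {psi_d k \<psi> T | T. T \<in> A \<and> psi_a k \<psi> T \<le> n}
                     in if finite S then Some (Max S) else None)"

definition everywhere_defined :: "nat \<Rightarrow> (nat list \<Rightarrow> nat) \<Rightarrow> table set \<Rightarrow> bool" where
  "everywhere_defined k \<psi> A \<longleftrightarrow> (\<forall>n. H_fun k \<psi> A n \<noteq> None)"

end

theory Submission
  imports Defs "HOL-Library.Nat_Bijection"
begin


definition cgrp :: "nat \<Rightarrow> nat" where "cgrp a = fst (prod_decode a)"
definition psi :: "nat list \<Rightarrow> nat" where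
  "psi w = max (length w) (Max (insert 0 (cgrp ` set w)))"

lemma psi_bounded: "bounded_cm psi"
  unfolding bounded_cm_def partially_bounded_cm_def
proof (intro conjI allI impI)
  fix w :: "nat list" show "psi w = 0 \<longleftrightarrow> w = []"
    by (cases w) (auto simp: psi_def)
next
  fix w w' :: "nat list" assume "mset w = mset w'"
  then have "set w = set w'" "length w = length w'"
    by (metis set_mset_mset, metis size_mset)
  then show "psi w = psi w'" by (simp add: psi_def)
next
  fix w w' :: "nat list" show "psi w \<le> psi (w @ w')"
    unfolding psi_def by (intro max.mono Max_mono) auto
next
  fix w w' :: "nat list" show "psi (w @ w') \<le> psi w + psi w'"
  proof -
    let ?M1 = "Max (insert 0 (cgrp ` set w))" and ?M2 = "Max (insert 0 (cgrp ` set w'))"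
    have a: "x \<le> ?M1" if "x \<in> cgrp ` set w" for x using that by simp
    have b: "x \<le> ?M2" if "x \<in> cgrp ` set w'" for x using that by simp
    have "Max (insert 0 (cgrp ` set (w @ w'))) \<le> ?M1 + ?M2"
      by (subst Max_le_iff) (auto dest: a b simp: image_Un le_add1 trans_le_add1 trans_le_add2)
    moreover have "?M1 + ?M2 \<le> max (length w) ?M1 + max (length w') ?M2" by (simp add: add_mono)
    moreover have "length w + length w' \<le> max (length w) ?M1 + max (length w') ?M2" by (simp add: add_mono)
    ultimately show ?thesis unfolding psi_def length_append by (intro max.boundedI) linarith+

  qed
next
  fix w :: "nat list" show "length w \<le> psi w" by (simp add: psi_def)
qed

lemma concat_if_map: "concat (map (\<lambda>i. if P i then [f i] else []) xs) = map f (filter P xs)"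
  by (induction xs) auto

lemma keep_first_alt: "keep_first rs = map (nth rs) (filter (\<lambda>i. \<forall>j<i. fst (rs ! j) \<noteq> fst (rs ! i)) [0..<length rs])"
  unfolding keep_first_def by (simp add: concat_if_map)

lemma kf_set: "set (keep_first xs) \<subseteq> set xs"
  by (auto simp: keep_first_alt)

lemma kf_nonempty: "xs \<noteq> [] \<Longrightarrow> keep_first xs \<noteq> []"
  by (auto simp: keep_first_alt filter_empty_conv)

lemma kf_distinct: "distinct (map fst (keep_first xs))"
proof -
  let ?P = "\<lambda>i. \<forall>j<i. fst (xs ! j) \<noteq> fst (xs ! i)"
  have "inj_on (\<lambda>i. fst (xs ! i)) (set (filter ?P [0..<length xs]))"
  proof (rule inj_onI)
    fix i j assume "i \<in> set (filter ?P [0..<length xs])" "j \<in> set (filter ?P [0..<length xs])"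
      "fst (xs ! i) = fst (xs ! j)"
    then show "i = j" by (cases i j rule: linorder_cases) auto
  qed
  then show ?thesis by (simp add: keep_first_alt distinct_map comp_def)
qed

lemma kf_id: "distinct (map fst xs) \<Longrightarrow> keep_first xs = xs"
proof -
  assume d: "distinct (map fst xs)"
  have "filter (\<lambda>i. \<forall>j<i. fst (xs ! j) \<noteq> fst (xs ! i)) [0..<length xs] = [0..<length xs]"
  proof (rule filter_True, clarsimp)
    fix i j assume "i < length xs" "j < i" "fst (xs ! j) = fst (xs ! i)"
    then show False using d by (auto simp: distinct_conv_nth)
  qed
  then show ?thesis by (simp add: keep_first_alt map_nth)
qed

lemma Lam_M: "Lam \<in> M_k k"
  by (simp add: M_k_def Lam_def cols_def rows_def)

lemma J_M: "T \<in> M_k k \<Longrightarrow> (\<forall>x. finite (\<nu> x) \<and> \<nu> x \<noteq> {}) \<Longrightarrow> J_op \<nu> T \<in> M_k k"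
  by (auto simp: M_k_def J_op_def cols_def rows_def comp_def)

lemma proj_len: "length (filter (\<lambda>i. cs ! i \<notin> D) [0..<length cs]) = length (filter (\<lambda>a. a \<notin> D) cs)"
proof -
  have "filter (\<lambda>a. a \<notin> D) cs = filter (\<lambda>a. a \<notin> D) (map (nth cs) [0..<length cs])"
    by (simp add: map_nth)
  also have "\<dots> = map (nth cs) (filter (\<lambda>i. cs ! i \<notin> D) [0..<length cs])"
    by (simp add: filter_map comp_def)
  finally show ?thesis by simp
qed

lemma I_M: assumes T: "T \<in> M_k k" and D: "D \<subseteq> At T" shows "I_op D T \<in> M_k k"
proof (cases "D = At T")
  case True then show ?thesis by (simp add: I_op_def Lam_M)
next
  case False
  then obtain a where a: "a \<in> set (cols T)" "a \<notin> D" using D by (auto simp: At_def)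
  then have rne: "rows T \<noteq> []" using T by (auto simp: M_k_def)
  let ?cs = "filter (\<lambda>a. a \<notin> D) (cols T)"
  let ?ys = "map (\<lambda>r. ([fst r ! i. i \<leftarrow> [0..<length (cols T)], cols T ! i \<notin> D], snd r)) (rows T)"
  have I: "I_op D T = (?cs, keep_first ?ys)" using False by (simp add: I_op_def)
  have "?cs \<noteq> []" using a by (auto simp: filter_empty_conv)
  moreover have "keep_first ?ys \<noteq> []" using rne by (intro kf_nonempty) simp
  moreover have "distinct ?cs" using T by (simp add: M_k_def)
  moreover have "\<forall>r\<in>set (keep_first ?ys). length (fst r) = length ?cs \<and> (\<forall>v\<in>set (fst r). v < k)
           \<and> finite (snd r) \<and> snd r \<noteq> {}"
  proof
    fix r assume "r \<in> set (keep_first ?ys)"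
    then have "r \<in> set ?ys" using kf_set by blast
    then obtain r0 where r0: "r0 \<in> set (rows T)" and r: "r = ([fst r0 ! i. i \<leftarrow> [0..<length (cols T)], cols T ! i \<notin> D], snd r0)"
      by auto
    have p: "length (fst r0) = length (cols T)" "\<forall>v\<in>set (fst r0). v < k" "finite (snd r0)" "snd r0 \<noteq> {}"
      using T r0 by (auto simp: M_k_def)
    show "length (fst r) = length ?cs \<and> (\<forall>v\<in>set (fst r). v < k) \<and> finite (snd r) \<and> snd r \<noteq> {}"
      using p by (auto simp: r proj_len concat_if_map)
  qed
  ultimately show ?thesis unfolding I by (simp add: M_k_def cols_def rows_def kf_distinct)
qed

definition Gc :: "(nat \<Rightarrow> nat) \<Rightarrow> nat \<Rightarrow> nat list" where
  "Gc \<phi> m = map (\<lambda>j. prod_encode (m, j)) [0..<Suc (\<phi> m)]"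

definition Acls :: "nat \<Rightarrow> (nat \<Rightarrow> nat) \<Rightarrow> table set" where
  "Acls k \<phi> = {T \<in> M_k k. \<exists>m\<ge>1. set (cols T) \<subseteq> set (Gc \<phi> m)}"

lemma self_closure: assumes T: "T \<in> M_k k" shows "T \<in> closure_tab T"
proof (cases "T = Lam")
  case True
  have "J_op (\<lambda>_. {0}) (I_op {} Lam) = Lam"
    by (simp add: I_op_def J_op_def At_def Lam_def cols_def rows_def)
  then show ?thesis unfolding closure_tab_def True
    by (intro CollectI exI[of _ "{}"] exI[of _ "\<lambda>_. {0::nat}"]) auto
next
  case False
  have cne: "cols T \<noteq> []"
  proof
    assume "cols T = []" then have "rows T = []" using T by (simp add: M_k_def)
    with \<open>cols T = []\<close> False show False by (simp add: Lam_def cols_def rows_def prod_eq_iff)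
  qed
  then have ne: "{} \<noteq> At T" by (simp add: At_def)
  define \<nu> where "\<nu> x = (case map_of (rows T) x of None \<Rightarrow> {0} | Some s \<Rightarrow> s)" for x
  have dr: "distinct (map fst (rows T))" using T by (simp add: M_k_def)
  have \<nu>ok: "\<forall>x. finite (\<nu> x) \<and> \<nu> x \<noteq> {}"
  proof
    fix x show "finite (\<nu> x) \<and> \<nu> x \<noteq> {}"
    proof (cases "map_of (rows T) x")
      case None then show ?thesis by (simp add: \<nu>_def)
    next
      case (Some s) then have "(x, s) \<in> set (rows T)" by (rule map_of_SomeD)
      then show ?thesis using T Some by (force simp: \<nu>_def M_k_def)
    qed
  qed
  have rowfix: "map (\<lambda>r. (map ((!) (fst r)) [0..<length (cols T)], snd r)) (rows T) = rows T"
  proof (rule map_idI)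
    fix r assume "r \<in> set (rows T)"
    then have "length (fst r) = length (cols T)" using T by (simp add: M_k_def)
    then show "(map ((!) (fst r)) [0..<length (cols T)], snd r) = r"
      by (metis map_nth prod.collapse)
  qed
  have "J_op \<nu> (I_op {} T) = T"
  proof -
    have "I_op {} T = (cols T, rows T)" using ne by (simp add: I_op_def concat_if_map rowfix kf_id dr)
    moreover have "map (\<lambda>r. (fst r, \<nu> (fst r))) (rows T) = rows T"
    proof (rule map_idI)
      fix r assume "r \<in> set (rows T)"
      then have "map_of (rows T) (fst r) = Some (snd r)" using dr by (simp add: map_of_is_SomeI)
      then show "(fst r, \<nu> (fst r)) = r" by (simp add: \<nu>_def)
    qed
    ultimately show ?thesis by (simp add: J_op_def cols_def rows_def)
  qed
  then show ?thesis unfolding closure_tab_def using \<nu>ok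
    by (intro CollectI exI[of _ "{}"] exI[of _ \<nu>]) auto
qed

lemma closed_A: "closed_class k (Acls k \<phi>)"
  unfolding closed_class_def
proof (intro conjI)
  have "Lam \<in> Acls k \<phi>" using Lam_M[of k] by (auto simp: Acls_def Lam_def cols_def intro: exI[of _ 1])
  then show "Acls k \<phi> \<noteq> {}" by blast
  show "Acls k \<phi> \<subseteq> M_k k" by (auto simp: Acls_def)
  show "closure_cls (Acls k \<phi>) = Acls k \<phi>"
  proof
    show "Acls k \<phi> \<subseteq> closure_cls (Acls k \<phi>)"
      using self_closure by (force simp: closure_cls_def Acls_def)
    show "closure_cls (Acls k \<phi>) \<subseteq> Acls k \<phi>"
    proof
      fix X assume "X \<in> closure_cls (Acls k \<phi>)"
      then obtain T D \<nu> where T: "T \<in> Acls k \<phi>" and X: "X = J_op \<nu> (I_op D T)" and D: "D \<subseteq> At T"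
        and \<nu>: "\<forall>x. finite (\<nu> x) \<and> \<nu> x \<noteq> {}"
        by (auto simp: closure_cls_def closure_tab_def)
      from T obtain m where m: "m \<ge> 1" "set (cols T) \<subseteq> set (Gc \<phi> m)" and TM: "T \<in> M_k k"
        by (auto simp: Acls_def)
      have "X \<in> M_k k" unfolding X using TM D \<nu> by (intro J_M I_M)
      moreover have "set (cols X) \<subseteq> set (cols T)"
        by (auto simp: X J_op_def I_op_def cols_def Lam_def)
      ultimately show "X \<in> Acls k \<phi>" using m unfolding Acls_def by blast
    qed
  qed
qed




fun mk :: "nat \<Rightarrow> table \<Rightarrow> nat list \<Rightarrow> (nat \<times> nat) list \<Rightarrow> dnode" where
  "mk k T [] w = Leaf (SOME d. d \<in> Pi_tab (subtab T w))"
| "mk k T (a # as) w = Node a (map (\<lambda>v. (v, mk k T as (w @ [(a, v)]))) [0..<k])"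

lemma mk_path: "path_of (mk k T as w0) w d \<Longrightarrow> map fst w = as \<and> d = (SOME d. d \<in> Pi_tab (subtab T (w0 @ w)))"
proof (induction as arbitrary: w0 w)
  case Nil then show ?case by (auto elim: path_of.cases)
next
  case (Cons a as)
  from Cons.prems obtain p w' where w: "w = (a, fst p) # w'" and p: "p \<in> set (map (\<lambda>v. (v, mk k T as (w0 @ [(a, v)]))) [0..<k])"
    and pw: "path_of (snd p) w' d"
    by (auto elim: path_of.cases)
  from p obtain v where pv: "p = (v, mk k T as (w0 @ [(a, v)]))" by auto
  from Cons.IH[of "w0 @ [(a,v)]" w'] pw show ?case by (simp add: w pv)
qed

lemma mk_path_ex: "length v = length as \<Longrightarrow> \<forall>x\<in>set v. x < k \<Longrightarrow>
   path_of (mk k T as w0) (zip as v) (SOME d. d \<in> Pi_tab (subtab T (w0 @ zip as v)))"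
proof (induction as arbitrary: v w0)
  case Nil then show ?case by (auto intro: path_of.intros)
next
  case (Cons a as)
  then obtain x v' where v: "v = x # v'" by (cases v) auto
  have "path_of (mk k T as (w0 @ [(a, x)])) (zip as v') (SOME d. d \<in> Pi_tab (subtab T ((w0 @ [(a, x)]) @ zip as v')))"
    using Cons.IH[of v' "w0 @ [(a,x)]"] Cons.prems by (simp add: v)
  moreover have "(x, mk k T as (w0 @ [(a, x)])) \<in> set (map (\<lambda>v. (v, mk k T as (w0 @ [(a, v)]))) [0..<k])"
    using Cons.prems by (auto simp: v)
  ultimately show ?case using path_of.intros(2)[of "(x, mk k T as (w0 @ [(a, x)]))"] by (simp add: v)
qed

lemma mk_wf: "0 < k \<Longrightarrow> wf_node k (mk k T as w0)"
proof (induction as arbitrary: w0)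
  case Nil show ?case by (simp add: wf_node.intros(1))
next
  case (Cons a as)
  show ?case unfolding mk.simps
    by (rule wf_node.intros(2)) (use Cons in auto)
qed

lemma mk_det: "det_node (mk k T as w0)"
proof (induction as arbitrary: w0)
  case Nil show ?case by (simp add: det_node.intros(1))
next
  case (Cons a as)
  have "map fst (map (\<lambda>v. (v, mk k T as (w0 @ [(a, v)]))) [0..<k]) = [0..<k]" by (simp add: comp_def)
  then show ?case unfolding mk.simps
    by (intro det_node.intros(2)) (use Cons in auto)
qed

lemma mk_attr: "has_attr (mk k T as w0) b \<Longrightarrow> b \<in> set as"
proof (induction as arbitrary: w0)
  case Nil then show ?case by (auto elim: has_attr.cases)
next
  case (Cons a as)
  from Cons.prems show ?case unfolding mk.simps
  proof (cases rule: has_attr.cases)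
    case 1 then show ?thesis by simp
  next
    case (2 p) then show ?thesis using Cons.IH by (auto, blast)
  qed
qed

lemma subtab_rows: "rows (subtab T w) = filter (\<lambda>r. row_matches T w (fst r)) (rows T)"
  by (simp add: subtab_def Let_def Lam_def rows_def)

lemma subtab_Lam: "subtab T w = Lam \<longleftrightarrow> filter (\<lambda>r. row_matches T w (fst r)) (rows T) = []"
  by (auto simp: subtab_def Let_def Lam_def)

lemma Pi_subtab: "Pi_tab (subtab T w) = \<Inter> (snd ` set (filter (\<lambda>r. row_matches T w (fst r)) (rows T)))"
  by (simp add: Pi_tab_def subtab_rows)

lemma rm_cons: "row_matches T ((a, v) # w) x \<longleftrightarrow> map_of (zip (cols T) x) a = Some v \<and> row_matches T w x"
  by (simp add: row_matches_def)

lemma rm_nil: "row_matches T [] x" by (simp add: row_matches_def)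

lemma rm_zip_self: "distinct (cols T) \<Longrightarrow> length x = length (cols T) \<Longrightarrow> row_matches T (zip (cols T) x) x"
  unfolding row_matches_def by (auto intro: map_of_is_SomeI)

lemma rm_zip_eq: assumes "distinct (cols T)" "length x = length (cols T)" "length v = length (cols T)"
  "row_matches T (zip (cols T) v) x" shows "x = v"
proof (rule nth_equalityI)
  show "length x = length v" using assms by simp
  fix i assume i: "i < length x"
  then have "(cols T ! i, v ! i) \<in> set (zip (cols T) v)" using assms by (auto simp: in_set_zip)
  then have "map_of (zip (cols T) x) (cols T ! i) = Some (v ! i)" using assms(4) by (auto simp: row_matches_def)
  moreover have "map_of (zip (cols T) x) (cols T ! i) = Some (x ! i)"
    using assms i by (simp add: map_of_zip_nth)
  ultimately show "x ! i = v ! i" by simp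
qed

lemma M_rows_ne: "T \<in> M_k k \<Longrightarrow> T \<noteq> Lam \<Longrightarrow> rows T \<noteq> [] \<and> cols T \<noteq> []"
  by (cases T) (auto simp: M_k_def Lam_def cols_def rows_def)

lemma det_exists:
  assumes T: "T \<in> M_k k" and ne: "T \<noteq> Lam" and k: "0 < k"
  shows "\<exists>\<Gamma>. det_tree_for k T \<Gamma> \<and> psi_tree \<psi> \<Gamma> = \<psi> (cols T)"
proof -
  let ?t = "mk k T (cols T) []"
  have dc: "distinct (cols T)" and dr: "distinct (map fst (rows T))"
    and rl: "\<And>r. r \<in> set (rows T) \<Longrightarrow> length (fst r) = length (cols T) \<and> (\<forall>v\<in>set (fst r). v < k) \<and> finite (snd r) \<and> snd r \<noteq> {}"
    using T by (auto simp: M_k_def)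
  have cp: "complete_path [?t] w d \<longleftrightarrow> path_of ?t w d" for w d by (simp add: complete_path_def)
  have cover: "\<exists>w d. complete_path [?t] w d \<and> r \<in> set (rows (subtab T w))" if r: "r \<in> set (rows T)" for r
  proof -
    have "path_of ?t (zip (cols T) (fst r)) (SOME d. d \<in> Pi_tab (subtab T ([] @ zip (cols T) (fst r))))"
      using rl[OF r] by (intro mk_path_ex) auto
    moreover have "r \<in> set (rows (subtab T (zip (cols T) (fst r))))"
      using r rl[OF r] dc by (simp add: subtab_rows rm_zip_self)
    ultimately show ?thesis by (auto simp: cp)
  qed
  have correct: "subtab T w = Lam \<or> d \<in> Pi_tab (subtab T w)" if "complete_path [?t] w d" for w d
  proof -
    from that have pw: "path_of ?t w d" by (simp add: cp)
    from mk_path[OF pw] have mw: "map fst w = cols T" and d: "d = (SOME d. d \<in> Pi_tab (subtab T w))" by auto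
    define v where "v = map snd w"
    have wz: "w = zip (cols T) v" unfolding v_def mw[symmetric] by (simp add: zip_map_fst_snd)
    have lv: "length v = length (cols T)" unfolding v_def using mw by (metis length_map)
    show ?thesis
    proof (cases "subtab T w = Lam")
      case False
      then have "filter (\<lambda>r. row_matches T w (fst r)) (rows T) \<noteq> []" by (simp add: subtab_Lam)
      then obtain r0 where r0: "r0 \<in> set (filter (\<lambda>r. row_matches T w (fst r)) (rows T))"
        using hd_in_set by blast
      have same: "r = r0" if "r \<in> set (filter (\<lambda>r. row_matches T w (fst r)) (rows T))" for r
      proof -
        have "fst r = v" using that rl[of r] dc lv by (intro rm_zip_eq) (auto simp: wz)
        moreover have "fst r0 = v" using r0 rl[of r0] dc lv by (intro rm_zip_eq) (auto simp: wz)
        ultimately show ?thesis using that r0 dr by (auto simp: distinct_map inj_on_def)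
      qed
      have "set (filter (\<lambda>r. row_matches T w (fst r)) (rows T)) = {r0}" using same r0 by blast
      then have "Pi_tab (subtab T w) = snd r0" by (simp add: Pi_subtab)
      moreover have "snd r0 \<noteq> {}" using r0 rl by auto
      ultimately have "\<exists>d. d \<in> Pi_tab (subtab T w)" by auto
      then show ?thesis unfolding d by (metis someI_ex)
    qed simp
  qed
  have attr: "At_tree [?t] \<subseteq> At T" using mk_attr[of k T "cols T" "[]"] by (auto simp: At_tree_def At_def)
  have det: "det_tree_for k T [?t]"
    unfolding det_tree_for_def ndet_tree_for_def k_tree_def
    using cover correct attr mk_wf[OF k] mk_det by auto
  obtain r where r: "r \<in> set (rows T)" using M_rows_ne[OF T ne] by (cases "rows T") auto
  obtain w0 d0 where w0: "path_of ?t w0 d0" using cover[OF r] by (auto simp: cp)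
  have "{\<psi> (map fst w) |w d. complete_path [?t] w d} \<subseteq> {\<psi> (cols T)}"
    by (auto simp: cp dest: mk_path)
  moreover have "\<psi> (map fst w0) \<in> {\<psi> (map fst w) |w d. complete_path [?t] w d}"
    using w0 unfolding cp by blast
  moreover have "map fst w0 = cols T" using mk_path[OF w0] by simp
  ultimately have "{\<psi> (map fst w) |w d. complete_path [?t] w d} = {\<psi> (cols T)}" by auto
  then have "psi_tree \<psi> [?t] = \<psi> (cols T)" by (simp add: psi_tree_def)
  with det show ?thesis by blast
qed



lemma finite_paths: "finite {w. \<exists>d. path_of t w d}"
proof (induction t)
  case (Leaf x)
  have "{w. \<exists>d. path_of (Leaf x) w d} \<subseteq> {[]}" by (auto elim: path_of.cases)
  then show ?case by (rule finite_subset) simp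
next
  case (Node a cs)
  have "{w. \<exists>d. path_of (Node a cs) w d} \<subseteq> (\<Union>p\<in>set cs. Cons (a, fst p) ` {w. \<exists>d. path_of (snd p) w d})"
  proof
    fix w assume "w \<in> {w. \<exists>d. path_of (Node a cs) w d}"
    then obtain d where "path_of (Node a cs) w d" by blast
    then show "w \<in> (\<Union>p\<in>set cs. Cons (a, fst p) ` {w. \<exists>d. path_of (snd p) w d})"
      by (cases rule: path_of.cases) auto
  qed
  moreover have "finite (\<Union>p\<in>set cs. Cons (a, fst p) ` {w. \<exists>d. path_of (snd p) w d})"
  proof (intro finite_UN_I finite_imageI finite.emptyI)
    fix p assume "p \<in> set cs"
    moreover have "snd p \<in> Basic_BNFs.snds p" by (cases p) simp
    ultimately show "finite {w. \<exists>d. path_of (snd p) w d}" by (rule Node.IH)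
  qed simp
  ultimately show ?case by (rule finite_subset)
qed

lemma psi_tree_ge: assumes "complete_path \<Gamma> w d" shows "\<psi> (map fst w) \<le> psi_tree \<psi> \<Gamma>"
proof -
  have "{\<psi> (map fst w) |w d. complete_path \<Gamma> w d} = (\<lambda>w. \<psi> (map fst w)) ` (\<Union>t\<in>set \<Gamma>. {w. \<exists>d. path_of t w d})"
    by (auto simp: complete_path_def)
  then have "finite {\<psi> (map fst w) |w d. complete_path \<Gamma> w d}" using finite_paths by simp
  then show ?thesis unfolding psi_tree_def using assms by (intro Max_ge) auto
qed




lemma mdom: "map_of (zip cs x) a = Some v \<Longrightarrow> a \<in> set cs"
  by (auto dest!: map_of_SomeD set_zip_leftD)

definition ev :: "nat \<Rightarrow> nat \<Rightarrow> nat list" where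
  "ev r i = map (\<lambda>j. if j = i then 1 else 0) [0..<r]"

lemma ev_len[simp]: "length (ev r i) = r" by (simp add: ev_def)

lemma mval: "distinct (cols T) \<Longrightarrow> length (cols T) = r \<Longrightarrow> j < r \<Longrightarrow>
  map_of (zip (cols T) (ev r i)) (cols T ! j) = Some (if j = i then 1 else 0)"
  by (simp add: map_of_zip_nth ev_def)

lemma adv:
  assumes "det_node t" and dc: "distinct (cols T)" and lc: "length (cols T) = r"
  shows "I \<subseteq> {..<r} \<Longrightarrow> I \<noteq> {} \<Longrightarrow> (\<forall>i\<in>I. \<exists>w d. path_of t w d \<and> row_matches T w (ev r i)) \<Longrightarrow>
    (\<forall>w d i. path_of t w d \<longrightarrow> i\<in>I \<longrightarrow> row_matches T w (ev r i) \<longrightarrow> d = i) \<Longrightarrow>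
    \<exists>w d. path_of t w d \<and> card I \<le> Suc (length w)"
  using assms(1)
proof (induction arbitrary: I rule: det_node.induct)
  case (1 d)
  have "I \<subseteq> {d}"
  proof
    fix i assume "i \<in> I"
    then have "d = i" using "1.prems"(4) path_of.intros(1)[of d] rm_nil[of T "ev r i"] by blast
    then show "i \<in> {d}" by simp
  qed
  then have "card I \<le> 1" by (simp add: card_mono[of "{d}", simplified])
  then show ?case using path_of.intros(1)[of d] by force
next
  case (2 cs a)
  from "2.prems" obtain i0 where i0: "i0 \<in> I" by blast
  from "2.prems"(3) i0 obtain w0 d0 where p0: "path_of (Node a cs) w0 d0" and m0: "row_matches T w0 (ev r i0)"
    by blast
  from p0 obtain p0' w0' where w0: "w0 = (a, fst p0') # w0'" by (cases rule: path_of.cases) auto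
  from m0 have "map_of (zip (cols T) (ev r i0)) a = Some (fst p0')" by (simp add: w0 rm_cons)
  then have "a \<in> set (cols T)" by (rule mdom)
  then obtain j where j: "j < r" "a = cols T ! j" using lc by (auto simp: in_set_conv_nth)
  have fin: "finite I" using "2.prems"(1) finite_subset by blast
  show ?case
  proof (cases "I - {j} = {}")
    case True
    then have "I \<subseteq> {j}" by blast
    then have "card I \<le> 1" by (simp add: card_mono[of "{j}", simplified])
    then show ?thesis using p0 by force
  next
    case False
    let ?I = "I - {j}"
    have zero: "map_of (zip (cols T) (ev r i)) a = Some 0" if "i \<in> ?I" for i
      using that j mval[OF dc lc] by auto
    from False obtain i1 where i1: "i1 \<in> ?I" by blast
    from "2.prems"(3) i1 obtain w1 d1 where p1: "path_of (Node a cs) w1 d1" and m1: "row_matches T w1 (ev r i1)"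
      by blast
    from p1 obtain q w1' where w1: "w1 = (a, fst q) # w1'" and q: "q \<in> set cs" and pq: "path_of (snd q) w1' d1"
      by (cases rule: path_of.cases) auto
    have q0: "fst q = 0" using m1 zero[OF i1] by (simp add: w1 rm_cons)
    have uniq: "p = q" if "p \<in> set cs" "fst p = 0" for p
      using "2.hyps"(1) that q q0 by (auto simp: distinct_map inj_on_def)
    have a1: "?I \<subseteq> {..<r}" using "2.prems"(1) by blast
      have a3: "\<forall>i\<in>?I. \<exists>w d. path_of (snd q) w d \<and> row_matches T w (ev r i)"
      proof
        fix i assume i: "i \<in> ?I"
        from "2.prems"(3) i obtain w d where p: "path_of (Node a cs) w d" and m: "row_matches T w (ev r i)"
          by blast
        from p obtain q' w' where w: "w = (a, fst q') # w'" and q': "q' \<in> set cs" and pq': "path_of (snd q') w' d"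
          by (cases rule: path_of.cases) auto
        have "fst q' = 0" using m zero[OF i] by (simp add: w rm_cons)
        then have "q' = q" using uniq q' by blast
        then show "\<exists>w d. path_of (snd q) w d \<and> row_matches T w (ev r i)"
          using pq' m by (auto simp: w rm_cons)
      qed
      have a4: "\<forall>w d i. path_of (snd q) w d \<longrightarrow> i \<in> ?I \<longrightarrow> row_matches T w (ev r i) \<longrightarrow> d = i"
      proof (intro allI impI)
        fix w d i assume pw: "path_of (snd q) w d" and i: "i \<in> ?I" and m: "row_matches T w (ev r i)"
        have "path_of (Node a cs) ((a, fst q) # w) d" using path_of.intros(2)[OF q pw] .
        moreover have "row_matches T ((a, fst q) # w) (ev r i)" using m zero[OF i] q0 by (simp add: rm_cons)
        ultimately show "d = i" using "2.prems"(4) i by blast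
      qed
    have IH: "\<exists>w d. path_of (snd q) w d \<and> card ?I \<le> Suc (length w)"
      using "2.IH" q a1 False a3 a4 by blast
    then obtain w d where pw: "path_of (snd q) w d" and c: "card ?I \<le> Suc (length w)" by blast
    have "card I \<le> Suc (card ?I)"
      using fin by (cases "j \<in> I") (simp_all add: card_Suc_Diff1)
    then have "card I \<le> Suc (length ((a, fst q) # w))" using c by simp
    then show ?thesis using path_of.intros(2)[OF q pw] by blast
  qed
qed




declare upt_Suc[simp del]

definition Etab :: "(nat \<Rightarrow> nat) \<Rightarrow> nat \<Rightarrow> table" where
  "Etab \<phi> n = (Gc \<phi> n, map (\<lambda>i. (ev (Suc (\<phi> n)) i, {i})) [0..<Suc (\<phi> n)])"

lemma Gc_distinct: "distinct (Gc \<phi> m)"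
  by (simp add: Gc_def distinct_map inj_on_def prod_encode_eq)

lemma Gc_cgrp: "a \<in> set (Gc \<phi> m) \<Longrightarrow> cgrp a = m"
  by (auto simp: Gc_def cgrp_def prod_encode_inverse)

lemma Gc_len: "length (Gc \<phi> m) = Suc (\<phi> m)" by (simp add: Gc_def)

lemma E_cols: "cols (Etab \<phi> n) = Gc \<phi> n" by (simp add: Etab_def cols_def)
lemma E_rows: "rows (Etab \<phi> n) = map (\<lambda>i. (ev (Suc (\<phi> n)) i, {i})) [0..<Suc (\<phi> n)]"
  by (simp add: Etab_def rows_def)

lemma ev_nth: "j < r \<Longrightarrow> ev r i ! j = (if j = i then 1 else 0)" by (simp add: ev_def)

lemma ev_inj: "i < r \<Longrightarrow> ev r i = ev r i' \<Longrightarrow> i = i'"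
  by (metis ev_nth zero_neq_one)

lemma E_M: assumes "2 \<le> k" shows "Etab \<phi> n \<in> M_k k"
proof -
  have "distinct (map (ev (Suc (\<phi> n))) [0..<Suc (\<phi> n)])"
    by (auto simp: distinct_map inj_on_def dest: ev_inj)
  moreover have "\<forall>v\<in>set (ev r i). v < k" for r i using assms by (auto simp: ev_def)
  ultimately show ?thesis
    by (auto simp: M_k_def E_cols E_rows Gc_distinct Gc_len comp_def) (simp add: Gc_def)
qed

lemma E_ne: "Etab \<phi> n \<noteq> Lam" by (simp add: Etab_def Lam_def Gc_def)

lemma E_A: "1 \<le> n \<Longrightarrow> 2 \<le> k \<Longrightarrow> Etab \<phi> n \<in> Acls k \<phi>"
  using E_M by (auto simp: Acls_def E_cols)

lemma E_match: "i < Suc (\<phi> n) \<Longrightarrow> row_matches (Etab \<phi> n) w (ev (Suc (\<phi> n)) i) \<Longrightarrow>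
   r = (ev (Suc (\<phi> n)) i, {i}) \<Longrightarrow> r \<in> set (rows (subtab (Etab \<phi> n) w)) \<and> subtab (Etab \<phi> n) w \<noteq> Lam"
  by (auto simp: subtab_rows subtab_Lam E_rows filter_empty_conv)

lemma E_det_lb: assumes "det_tree_for k (Etab \<phi> n) \<Gamma>" shows "\<phi> n \<le> psi_tree psi \<Gamma>"
proof -
  let ?E = "Etab \<phi> n" and ?r = "Suc (\<phi> n)"
  from assms obtain t where G: "\<Gamma> = [t]" and dt: "det_node t"
    by (auto simp: det_tree_for_def length_Suc_conv)
  have nd: "ndet_tree_for k ?E \<Gamma>" using assms by (simp add: det_tree_for_def)
  have cp: "complete_path \<Gamma> w d \<longleftrightarrow> path_of t w d" for w d by (simp add: complete_path_def G)
  have a3: "\<forall>i\<in>{..<?r}. \<exists>w d. path_of t w d \<and> row_matches ?E w (ev ?r i)"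
  proof
    fix i assume i: "i \<in> {..<?r}"
    then have "(ev ?r i, {i}) \<in> set (rows ?E)" by (simp add: E_rows)
    then obtain w d where "complete_path \<Gamma> w d" "(ev ?r i, {i}) \<in> set (rows (subtab ?E w))"
      using nd by (auto simp: ndet_tree_for_def)
    then show "\<exists>w d. path_of t w d \<and> row_matches ?E w (ev ?r i)" by (auto simp: cp subtab_rows)
  qed
  have a4: "\<forall>w d i. path_of t w d \<longrightarrow> i \<in> {..<?r} \<longrightarrow> row_matches ?E w (ev ?r i) \<longrightarrow> d = i"
  proof (intro allI impI)
    fix w d i assume p: "path_of t w d" and i: "i \<in> {..<?r}" and m: "row_matches ?E w (ev ?r i)"
    from E_match[OF _ m refl] i have inr: "(ev ?r i, {i}) \<in> set (rows (subtab ?E w))" and nl: "subtab ?E w \<noteq> Lam" by auto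
    have "d \<in> Pi_tab (subtab ?E w)" using nd p nl by (auto simp: ndet_tree_for_def cp)
    then show "d = i" using inr by (auto simp: Pi_tab_def)
  qed
  obtain w d where pw: "path_of t w d" and c: "card {..<?r} \<le> Suc (length w)"
    using adv[OF dt, of ?E ?r "{..<?r}"] a3 a4 by (auto simp: E_cols Gc_distinct Gc_len)
  have "\<phi> n \<le> length w" using c by simp
  also have "\<dots> \<le> psi (map fst w)" by (simp add: psi_def)
  also have "\<dots> \<le> psi_tree psi \<Gamma>" using pw by (intro psi_tree_ge[of _ _ d]) (simp add: cp)
  finally show ?thesis .
qed

lemma E_psi_d: assumes "2 \<le> k" shows "\<phi> n \<le> psi_d k psi (Etab \<phi> n)"
proof -
  have ex: "\<exists>m \<Gamma>. det_tree_for k (Etab \<phi> n) \<Gamma> \<and> psi_tree psi \<Gamma> = m"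
    using det_exists[where \<psi>=psi, OF E_M[OF assms] E_ne] assms by auto
  then obtain \<Gamma> where "det_tree_for k (Etab \<phi> n) \<Gamma>" "psi_tree psi \<Gamma> = psi_d k psi (Etab \<phi> n)"
    using LeastI_ex[OF ex] by (auto simp: psi_d_def E_ne)
  with E_det_lb show ?thesis by metis
qed

lemma leaf_path: "path_of (Node a [(v, Leaf i)]) w d \<longleftrightarrow> w = [(a, v)] \<and> d = i"
proof
  assume "path_of (Node a [(v, Leaf i)]) w d"
  then show "w = [(a, v)] \<and> d = i"
    by (cases rule: path_of.cases) (auto elim: path_of.cases)
next
  assume "w = [(a, v)] \<and> d = i"
  then show "path_of (Node a [(v, Leaf i)]) w d"
    using path_of.intros(2)[of "(v, Leaf i)" "[(v, Leaf i)]" "[]" i a] path_of.intros(1)[of i] by simp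
qed

lemma E_psi_a: assumes k: "2 \<le> k" and n: "1 \<le> n" shows "psi_a k psi (Etab \<phi> n) \<le> n"
proof -
  let ?E = "Etab \<phi> n" and ?r = "Suc (\<phi> n)" and ?cs = "Gc \<phi> n"
  define \<Gamma> where "\<Gamma> = map (\<lambda>i. Node (?cs ! i) [(1, Leaf i)]) [0..<?r]"
  have cp: "complete_path \<Gamma> w d \<longleftrightarrow> (\<exists>i<?r. w = [(?cs ! i, 1)] \<and> d = i)" for w d
    by (auto simp: complete_path_def \<Gamma>_def leaf_path)
  have mt: "row_matches ?E [(?cs ! i, 1)] (ev ?r j) \<longleftrightarrow> i = j" if "i < ?r" "j < ?r" for i j
    using mval[of ?E ?r i j] that by (simp add: row_matches_def E_cols Gc_distinct Gc_len)
  have nd: "ndet_tree_for k ?E \<Gamma>"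
    unfolding ndet_tree_for_def
  proof (intro conjI)
    show "k_tree k \<Gamma>" using k
      by (auto simp: k_tree_def \<Gamma>_def intro!: wf_node.intros)
    have ha: "b = a" if "has_attr (Node a [(v, Leaf i)]) b" for a v i b
      using that
    proof (cases rule: has_attr.cases)
      case (2 p) then show ?thesis by (auto elim: has_attr.cases)
    qed simp
    show "At_tree \<Gamma> \<subseteq> At ?E"
      by (auto simp: At_tree_def \<Gamma>_def At_def E_cols Gc_len dest!: ha)
    show "\<forall>r\<in>set (rows ?E). \<exists>w d. complete_path \<Gamma> w d \<and> r \<in> set (rows (subtab ?E w))"
    proof
      fix r assume "r \<in> set (rows ?E)"
      then obtain i where i: "i < ?r" and r: "r = (ev ?r i, {i})" by (auto simp: E_rows)
      have "r \<in> set (rows (subtab ?E [(?cs ! i, 1)]))" using E_match[OF i mt[OF i i, THEN iffD2, OF refl] r] by simp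
      moreover have "complete_path \<Gamma> [(?cs ! i, 1)] i" using i cp by blast
      ultimately show "\<exists>w d. complete_path \<Gamma> w d \<and> r \<in> set (rows (subtab ?E w))" by blast
    qed
    show "\<forall>w d. complete_path \<Gamma> w d \<longrightarrow> subtab ?E w = Lam \<or> d \<in> Pi_tab (subtab ?E w)"
    proof (intro allI impI)
      fix w d assume "complete_path \<Gamma> w d"
      then obtain i where i: "i < ?r" and w: "w = [(?cs ! i, 1)]" and d: "d = i" using cp by blast
      have "d \<in> Pi_tab (subtab ?E w)"
        unfolding Pi_subtab using mt[OF i] by (auto simp: E_rows w d)
      then show "subtab ?E w = Lam \<or> d \<in> Pi_tab (subtab ?E w)" ..
    qed
  qed
  have ps: "psi [?cs ! i] = n" if "i < ?r" for i
    using that n Gc_cgrp[of "?cs ! i" \<phi> n] by (simp add: psi_def Gc_len)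
  have "{psi (map fst w) |w d. complete_path \<Gamma> w d} = {n}"
  proof
    show "{psi (map fst w) |w d. complete_path \<Gamma> w d} \<subseteq> {n}" using ps by (auto simp: cp)
    have "complete_path \<Gamma> [(?cs ! 0, 1)] 0" using cp by blast
    then show "{n} \<subseteq> {psi (map fst w) |w d. complete_path \<Gamma> w d}" using ps[of 0] by force
  qed
  then have "psi_tree psi \<Gamma> = n" by (simp add: psi_tree_def)
  then show ?thesis using nd unfolding psi_a_def using E_ne by (auto intro: Least_le)
qed




lemma subtab_nil: "T \<in> M_k k \<Longrightarrow> T \<noteq> Lam \<Longrightarrow> subtab T [] = T"
  using M_rows_ne[of T k] by (simp add: subtab_def rm_nil cols_def rows_def)

lemma leaf_only_path: "path_of (Leaf d) w d' \<longleftrightarrow> w = [] \<and> d' = d"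
  by (auto elim: path_of.cases intro: path_of.intros)

lemma pd_Pi: assumes T: "T \<in> M_k k" and ne: "T \<noteq> Lam" and P: "Pi_tab T \<noteq> {}"
  shows "psi_d k psi T = 0"
proof -
  obtain d where d: "d \<in> Pi_tab T" using P by blast
  have cp: "complete_path [Leaf d] w d' \<longleftrightarrow> w = [] \<and> d' = d" for w d'
    by (simp add: complete_path_def leaf_only_path)
  have noattr: "\<not> has_attr (Leaf d) b" for b by (auto elim: has_attr.cases)
  have "det_tree_for k T [Leaf d]"
    unfolding det_tree_for_def ndet_tree_for_def k_tree_def
    using subtab_nil[OF T ne] d noattr
    by (auto simp: cp At_tree_def intro: wf_node.intros det_node.intros)
  moreover have "psi_tree psi [Leaf d] = 0"
  proof -
    have "{psi (map fst w) |w d'. complete_path [Leaf d] w d'} = {0}" by (auto simp: cp psi_def)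
    then show ?thesis by (simp add: psi_tree_def)
  qed
  ultimately show ?thesis unfolding psi_d_def using ne by (auto intro!: Least_eq_0)
qed

lemma pa_lb: assumes T: "T \<in> M_k k" and ne: "T \<noteq> Lam" and P: "Pi_tab T = {}" and k: "2 \<le> k"
  and g: "\<forall>a\<in>set (cols T). cgrp a = m"
  shows "m \<le> psi_a k psi T"
proof -
  have ex: "\<exists>m \<Gamma>. ndet_tree_for k T \<Gamma> \<and> psi_tree psi \<Gamma> = m"
    using det_exists[where \<psi>=psi, OF T ne] k by (auto simp: det_tree_for_def)
  then obtain \<Gamma> where nd: "ndet_tree_for k T \<Gamma>" and eq: "psi_tree psi \<Gamma> = psi_a k psi T"
    using LeastI_ex[OF ex] by (auto simp: psi_a_def ne)
  obtain r where r: "r \<in> set (rows T)" using M_rows_ne[OF T ne] by (cases "rows T") auto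
  then obtain w d where cpw: "complete_path \<Gamma> w d" and rw: "r \<in> set (rows (subtab T w))"
    using nd by (auto simp: ndet_tree_for_def)
  have nl: "subtab T w \<noteq> Lam" using rw by (auto simp: Lam_def rows_def)
  then have dP: "d \<in> Pi_tab (subtab T w)" using nd cpw by (auto simp: ndet_tree_for_def)
  show ?thesis
  proof (cases w)
    case Nil
    then show ?thesis using dP P subtab_nil[OF T ne] by simp
  next
    case (Cons p w')
    have "row_matches T w (fst r)" using rw by (simp add: subtab_rows)
    then have "map_of (zip (cols T) (fst r)) (fst p) = Some (snd p)" by (simp add: Cons row_matches_def)
    then have "fst p \<in> set (cols T)" by (rule mdom)
    then have "m = cgrp (fst p)" using g by simp
    also have "\<dots> \<le> Max (insert 0 (cgrp ` set (map fst w)))" by (simp add: Cons)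
    also have "\<dots> \<le> psi (map fst w)" by (simp add: psi_def)
    also have "\<dots> \<le> psi_tree psi \<Gamma>" by (rule psi_tree_ge[OF cpw])
    finally show ?thesis using eq by simp
  qed
qed

lemma upper:
  assumes mono: "mono \<phi>" and ge: "\<forall>n. n \<le> \<phi> n" and k: "2 \<le> k"
    and TA: "T \<in> Acls k \<phi>" and pa: "psi_a k psi T \<le> n"
  shows "psi_d k psi T \<le> \<phi> n + n"
proof (cases "T = Lam")
  case True then show ?thesis by (simp add: psi_d_def)
next
  case ne: False
  from TA obtain m where m: "1 \<le> m" "set (cols T) \<subseteq> set (Gc \<phi> m)" and T: "T \<in> M_k k"
    by (auto simp: Acls_def)
  show ?thesis
  proof (cases "Pi_tab T = {}")
    case False then show ?thesis using pd_Pi[OF T ne] by simp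
  next
    case True
    have g: "\<forall>a\<in>set (cols T). cgrp a = m" using m Gc_cgrp by blast
    have mn: "m \<le> n" using pa_lb[OF T ne True k g] pa by simp
    obtain \<Gamma> where dt: "det_tree_for k T \<Gamma>" and pt: "psi_tree psi \<Gamma> = psi (cols T)"
      using det_exists[where \<psi>=psi, OF T ne] k by auto
    have pd: "psi_d k psi T \<le> psi (cols T)"
      unfolding psi_d_def using ne dt pt by (auto intro: Least_le)
    have "length (cols T) = card (set (cols T))" using T by (simp add: M_k_def distinct_card)
    also have "\<dots> \<le> card (set (Gc \<phi> m))" using m by (intro card_mono) auto
    also have "\<dots> = Suc (\<phi> m)" by (simp add: distinct_card Gc_distinct Gc_len)
    finally have l: "length (cols T) \<le> Suc (\<phi> m)" .
    have "Max (insert 0 (cgrp ` set (cols T))) \<le> m" using g by (subst Max_le_iff) auto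
    then have "psi (cols T) \<le> max (Suc (\<phi> m)) m" using l unfolding psi_def by (intro max.mono) simp_all
    moreover have "\<phi> m \<le> \<phi> n" using mono mn by (simp add: mono_def)
    moreover have "m \<le> \<phi> m" using ge by simp
    ultimately show ?thesis using pd m(1) mn by simp
  qed
qed

lemma psi_a_Lam: "psi_a k psi Lam = 0" by (simp add: psi_a_def)
lemma psi_d_Lam: "psi_d k psi Lam = 0" by (simp add: psi_d_def)

theorem theorem3:
  fixes k :: nat and \<phi> :: "nat \<Rightarrow> nat"
  assumes "k \<ge> 2" and "mono \<phi>" and "\<forall>n. n \<le> \<phi> n" and "\<phi> 0 = 0"
  shows "\<exists>A \<psi>. closed_class k A \<and> bounded_cm \<psi> \<and> everywhere_defined k \<psi> A
           \<and> (\<forall>n. \<phi> n \<le> the (H_fun k \<psi> A n) \<and> the (H_fun k \<psi> A n) \<le> \<phi> n + n)"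
proof (intro exI conjI allI)
  let ?A = "Acls k \<phi>"
  show "closed_class k ?A" by (rule closed_A)
  show "bounded_cm psi" by (rule psi_bounded)
  have LamA: "Lam \<in> ?A" using Lam_M[of k] by (auto simp: Acls_def Lam_def cols_def intro: exI[of _ 1])
  define S where "S n = {psi_d k psi T |T. T \<in> ?A \<and> psi_a k psi T \<le> n}" for n
  have Ssub: "S n \<subseteq> {..\<phi> n + n}" for n using upper[OF assms(2,3,1)] by (auto simp: S_def)
  have fin: "finite (S n)" for n using Ssub finite_subset by blast
  have ne: "0 \<in> S n" for n
  proof -
    have "psi_d k psi Lam \<in> S n" unfolding S_def using LamA psi_a_Lam[of k] by (intro CollectI exI[of _ Lam]) simp
    then show ?thesis by (simp add: psi_d_Lam)
  qed
  have H0: "H_fun k psi ?A n = (if finite (S n) then Some (Max (S n)) else None)" for n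
    unfolding H_fun_def Let_def S_def by (rule refl)
  have H: "H_fun k psi ?A n = Some (Max (S n))" for n using fin H0 by simp
  show "everywhere_defined k psi ?A" by (simp add: everywhere_defined_def H)
  fix n
  show "the (H_fun k psi ?A n) \<le> \<phi> n + n" 
  proof -
    have "Max (S n) \<le> \<phi> n + n" using Ssub[of n] fin[of n] ne[of n] by (subst Max_le_iff) auto
    then show ?thesis by (simp add: H)
  qed
  show "\<phi> n \<le> the (H_fun k psi ?A n)"
  proof (cases "n = 0")
    case True then show ?thesis using assms(4) by simp
  next
    case False
    then have n1: "1 \<le> n" by simp
    have "psi_d k psi (Etab \<phi> n) \<in> S n"
      unfolding S_def using E_A[OF n1 assms(1), of \<phi>] E_psi_a[OF assms(1) n1, of \<phi>]
      by (intro CollectI exI[of _ "Etab \<phi> n"]) simp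
    then have "psi_d k psi (Etab \<phi> n) \<le> Max (S n)" using fin by (rule Max_ge[rotated])
    then show ?thesis using E_psi_d[OF assms(1), of \<phi> n] by (simp add: H)
  qed
qed


end
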